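(* Let $f\ge0$ be integrable on $[-\pi,\pi]$ with $\int f>0$ and such that $\lim_{n\to\infty}\sigma_{n+1}^2(f)/\sigma_n^2(f)=1$. Let $p_n$ be the optimal polynomial for $f$ and define $K_n(\lambda)=|p_n(e^{i\lambda})|^2f(\lambda)/\sigma_n^2(f)$. Then $K_n\ge0$, $\int_{-\pi}^{\pi}K_n(\lambda)\,d\lambda=1$, and for every $0<\delta\le\pi$, $$\lim_{n\to\infty}\int_{\delta\le|\lambda|\le\pi}K_n(\lambda)\,d\lambda=0;$$ i.e. $\{K_n\}$ is an approximate identity.
   Context: $\sigma_n^2(f)=\min_{q\in\mathcal{Q}_n(1)}\int_{-\pi}^{\pi}|q(e^{i\lambda})|^2f(\lambda)\,d\lambda$, where $\mathcal{Q}_n(1)$ is the set of complex polynomials of degree at most $n$ with $q(1)=1$; the optimal polynomial $p_n\in\mathcal{Q}_n(1)$ is the unique minimizer. *)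

theory Defs
  imports "HOL-Analysis.Analysis" "HOL-Computational_Algebra.Polynomial"
begin

definition Qn1 :: "nat \<Rightarrow> complex poly set" where
  "Qn1 n = {q. degree q \<le> n \<and> poly q 1 = 1}"

definition energy :: "(real \<Rightarrow> real) \<Rightarrow> complex poly \<Rightarrow> real" where
  "energy f q = integral {-pi..pi} (\<lambda>t. (cmod (poly q (exp (\<i> * complex_of_real t))))\<^sup>2 * f t)"

definition sigma2 :: "(real \<Rightarrow> real) \<Rightarrow> nat \<Rightarrow> real" where
  "sigma2 f n = (INF q\<in>Qn1 n. energy f q)"

definition optpoly :: "(real \<Rightarrow> real) \<Rightarrow> nat \<Rightarrow> complex poly" where
  "optpoly f n = (THE p. p \<in> Qn1 n \<and> (\<forall>q\<in>Qn1 n. energy f p \<le> energy f q))"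

definition kernel :: "(real \<Rightarrow> real) \<Rightarrow> nat \<Rightarrow> real \<Rightarrow> real" where
  "kernel f n t = (cmod (poly (optpoly f n) (exp (\<i> * complex_of_real t))))\<^sup>2 * f t / sigma2 f n"

end

theory Submission
  imports Defs
begin

lemma int_mult:
  fixes f h :: "real \<Rightarrow> real"
  assumes h: "continuous_on {-pi..pi} h" and f: "f integrable_on {-pi..pi}"
    and nn: "\<And>t. t \<in> {-pi..pi} \<Longrightarrow> f t \<ge> 0"
  shows "(\<lambda>t. h t * f t) integrable_on {-pi..pi}"
proof -
  have "(\<lambda>t. h t * f t) absolutely_integrable_on {-pi..pi}"
  proof (rule absolutely_integrable_bounded_measurable_product_real)
    show "h \<in> borel_measurable (lebesgue_on {-pi..pi})"
      by (rule continuous_imp_measurable_on_sets_lebesgue[OF h]) auto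
    show "bounded (h ` {-pi..pi})"
      by (intro compact_imp_bounded compact_continuous_image h) auto
    show "f absolutely_integrable_on {-pi..pi}"
      by (rule nonnegative_absolutely_integrable_1[OF f nn])
  qed auto
  then show ?thesis using set_lebesgue_integral_eq_integral(1) by blast
qed

definition ev :: "complex poly \<Rightarrow> real \<Rightarrow> complex" where
  "ev q t = poly q (exp (\<i> * complex_of_real t))"

definition Bf :: "(real \<Rightarrow> real) \<Rightarrow> complex poly \<Rightarrow> complex poly \<Rightarrow> real" where
  "Bf f p q = integral {-pi..pi} (\<lambda>t. Re (ev p t * cnj (ev q t)) * f t)"

lemma cont_ev: "continuous_on A (\<lambda>t. Re (ev p t * cnj (ev q t)))"
  unfolding ev_def by (intro continuous_intros)

lemma energy_Bf: "energy f q = Bf f q q"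
proof -
  have "(cmod z)\<^sup>2 = Re (z * cnj z)" for z
    by (simp flip: complex_norm_square)
  then show ?thesis unfolding energy_def Bf_def ev_def by simp
qed

lemma ev_add[simp]: "ev (p + q) t = ev p t + ev q t" by (simp add: ev_def)
lemma ev_diff[simp]: "ev (p - q) t = ev p t - ev q t" by (simp add: ev_def)
lemma ev_smult[simp]: "ev (smult c p) t = c * ev p t" by (simp add: ev_def)
lemma ev_0[simp]: "ev 0 t = 0" by (simp add: ev_def)

locale bform =
  fixes B :: "complex poly \<Rightarrow> complex poly \<Rightarrow> real"
  assumes badd: "B (p + q) r = B p r + B q r"
    and bdiff: "B (p - q) r = B p r - B q r"
    and bscale: "B (smult (complex_of_real a) p) r = a * B p r"
    and bsym: "B p q = B q p"
    and bnonneg: "B p p \<ge> 0"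
begin

lemma badd_r: "B r (p + q) = B r p + B r q"
  using badd bsym by metis
lemma bdiff_r: "B r (p - q) = B r p - B r q"
  using bdiff bsym by metis
lemma bscale_r: "B r (smult (complex_of_real a) p) = a * B r p"
  using bscale bsym by metis
lemma bzero: "B 0 r = 0"
  using bdiff[of r r r] by simp
lemma bzero_r: "B r 0 = 0"
  using bzero bsym by metis

lemma cs0:
  assumes "B u u = 0" shows "B r u = 0"
proof (rule ccontr)
  assume ne: "B r u \<noteq> 0"
  define s where "s = (B r r + 1) / (2 * B r u)"
  have "0 \<le> B (r - smult (complex_of_real s) u) (r - smult (complex_of_real s) u)"
    by (rule bnonneg)
  also have "\<dots> = B r r - 2 * s * B r u + s * s * B u u"
    by (simp add: bdiff bdiff_r bscale bscale_r bsym[of u r] algebra_simps)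
  also have "\<dots> = -1" using ne assms by (simp add: s_def field_simps)
  finally show False by simp
qed

definition subsp :: "complex poly set \<Rightarrow> bool" where
  "subsp S \<longleftrightarrow> 0 \<in> S \<and> (\<forall>p\<in>S. \<forall>q\<in>S. p + q \<in> S \<and> p - q \<in> S)
     \<and> (\<forall>a p. p \<in> S \<longrightarrow> smult (complex_of_real a) p \<in> S)"

definition hasproj :: "complex poly set \<Rightarrow> bool" where
  "hasproj S \<longleftrightarrow> (\<forall>x. \<exists>y\<in>S. \<forall>s\<in>S. B (x - y) s = 0)"

lemma proj_step:
  assumes sS: "subsp S" and hS: "hasproj S" and sT: "subsp T" and ST: "S \<subseteq> T"
    and vT: "v \<in> T" and rep: "\<And>t. t \<in> T \<Longrightarrow> \<exists>s\<in>S. \<exists>a. t = s + smult (complex_of_real a) v"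
  shows "hasproj T"
  unfolding hasproj_def
proof
  fix x
  obtain y1 where y1: "y1 \<in> S" "\<And>s. s \<in> S \<Longrightarrow> B (x - y1) s = 0"
    using hS unfolding hasproj_def by blast
  obtain z where z: "z \<in> S" "\<And>s. s \<in> S \<Longrightarrow> B (v - z) s = 0"
    using hS unfolding hasproj_def by blast
  define r where "r = x - y1"
  define u where "u = v - z"
  define c where "c = B r u / B u u"
  have uT: "u \<in> T" using vT z(1) ST sT unfolding u_def subsp_def by blast
  have yT: "y1 + smult (complex_of_real c) u \<in> T"
    using uT y1(1) ST sT unfolding subsp_def by blast
  have key: "B r u - c * B u u = 0"
  proof (cases "B u u = 0")
    case True then show ?thesis using cs0[of u r] by (simp add: c_def)
  next
    case False then show ?thesis by (simp add: c_def)
  qed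
  have xy: "x - (y1 + smult (complex_of_real c) u) = r - smult (complex_of_real c) u"
    by (simp add: r_def algebra_simps)
  have orthS: "B (r - smult (complex_of_real c) u) s = 0" if "s \<in> S" for s
    using y1(2)[OF that] z(2)[OF that] by (simp add: bdiff bscale r_def u_def)
  have orthv: "B (r - smult (complex_of_real c) u) v = 0"
  proof -
    have "v = u + z" by (simp add: u_def)
    then have "B (r - smult (complex_of_real c) u) v
       = B (r - smult (complex_of_real c) u) u + B (r - smult (complex_of_real c) u) z"
      by (metis badd_r)
    also have "\<dots> = B r u - c * B u u" using orthS[OF z(1)] by (simp add: bdiff bscale)
    finally show ?thesis using key by simp
  qed
  show "\<exists>y\<in>T. \<forall>s\<in>T. B (x - y) s = 0"
  proof (intro bexI[OF _ yT] ballI)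
    fix t assume "t \<in> T"
    then obtain s a where sa: "s \<in> S" "t = s + smult (complex_of_real a) v" using rep by blast
    show "B (x - (y1 + smult (complex_of_real c) u)) t = 0"
      unfolding xy sa(2) badd_r bscale_r using orthS[OF sa(1)] orthv by simp
  qed
qed

definition W :: "nat \<Rightarrow> complex poly set" where
  "W n = {w. degree w \<le> n \<and> poly w 1 = 0}"

lemma subsp_W: "subsp (W n)"
  unfolding subsp_def W_def
  by (auto intro: order.trans[OF degree_add_le] order.trans[OF degree_diff_le]
      order.trans[OF degree_smult_le])

definition W1 :: "nat \<Rightarrow> complex poly set" where
  "W1 n = {w \<in> W (Suc n). Im (coeff w (Suc n)) = 0}"

lemma subsp_W1: "subsp (W1 n)"
  using subsp_W[of "Suc n"] unfolding subsp_def W1_def by auto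

definition vv :: "nat \<Rightarrow> complex poly" where
  "vv n = monom 1 (Suc n) - 1"

lemma coeff_vv: "coeff (vv n) (Suc n) = 1" "i > Suc n \<Longrightarrow> coeff (vv n) i = 0"
  by (auto simp: vv_def coeff_monom)

lemma degree_vv: "degree (vv n) \<le> Suc n"
  unfolding vv_def by (rule order.trans[OF degree_diff_le]) (auto simp: degree_monom_le)

lemma poly_vv: "poly (vv n) 1 = 0"
  by (simp add: vv_def poly_monom)

lemma hasproj_W0: "hasproj (W 0)"
  unfolding hasproj_def
proof
  fix x
  have "s = 0" if "s \<in> W 0" for s
  proof -
    from that have "degree s = 0" "poly s 1 = 0" by (auto simp: W_def)
    moreover have "[:coeff s 0:] = s" by (rule degree_0_id) fact
    ultimately have "coeff s 0 = 0" by (metis poly_pCons poly_0 mult_zero_right add.right_neutral)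
    then show ?thesis using \<open>[:coeff s 0:] = s\<close> by simp
  qed
  note z = this
  have "0 \<in> W 0" by (simp add: W_def)
  then show "\<exists>y\<in>W 0. \<forall>s\<in>W 0. B (x - y) s = 0"
  proof (rule bexI[rotated], intro ballI)
    fix s assume "s \<in> W 0"
    then show "B (x - 0) s = 0" using z[of s] bzero_r by simp
  qed
qed

lemma hasproj_W: "hasproj (W n)"
proof (induction n)
  case 0 show ?case by (rule hasproj_W0)
next
  case (Suc n)
  have h1: "hasproj (W1 n)"
  proof (rule proj_step[OF subsp_W Suc subsp_W1 _ _])
    show "W n \<subseteq> W1 n"
      by (auto simp: W_def W1_def coeff_eq_0)
    show "vv n \<in> W1 n" using degree_vv poly_vv coeff_vv by (simp add: W1_def W_def)
    fix t assume t: "t \<in> W1 n"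
    define a where "a = Re (coeff t (Suc n))"
    have ca: "coeff t (Suc n) = complex_of_real a"
      using t by (simp add: W1_def a_def complex_eq_iff)
    have "t - smult (complex_of_real a) (vv n) \<in> W n"
      unfolding W_def
    proof (intro CollectI conjI degree_le allI impI)
      fix i assume "n < i"
      then consider "i = Suc n" | "i > Suc n" by linarith
      then show "coeff (t - smult (complex_of_real a) (vv n)) i = 0"
      proof cases
        case 1 then show ?thesis using ca coeff_vv by simp
      next
        case 2 then show ?thesis using t coeff_vv(2)[OF 2]
          by (simp add: W1_def W_def coeff_eq_0)
      qed
    next
      show "poly (t - smult (complex_of_real a) (vv n)) 1 = 0"
        using t poly_vv by (simp add: W1_def W_def)
    qed
    then show "\<exists>s\<in>W n. \<exists>a. t = s + smult (complex_of_real a) (vv n)"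
      by (intro bexI[of _ "t - smult (complex_of_real a) (vv n)"] exI[of _ a]) auto
  qed
  show ?case
  proof (rule proj_step[OF subsp_W1 h1 subsp_W _ _])
    show "W1 n \<subseteq> W (Suc n)" by (auto simp: W1_def)
    have "smult \<i> (vv n) \<in> W (Suc n)" using degree_vv poly_vv
      by (simp add: W_def order.trans[OF degree_smult_le])
    then show "smult \<i> (vv n) \<in> W (Suc n)" .
    fix t assume t: "t \<in> W (Suc n)"
    define a where "a = Im (coeff t (Suc n))"
    have "t - smult (complex_of_real a) (smult \<i> (vv n)) \<in> W (Suc n)"
      using t \<open>smult \<i> (vv n) \<in> W (Suc n)\<close> subsp_W[of "Suc n"] unfolding subsp_def by blast
    moreover have "Im (coeff (t - smult (complex_of_real a) (smult \<i> (vv n))) (Suc n)) = 0"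
      using coeff_vv by (simp add: a_def)
    ultimately have "t - smult (complex_of_real a) (smult \<i> (vv n)) \<in> W1 n" by (simp add: W1_def)
    then show "\<exists>s\<in>W1 n. \<exists>a. t = s + smult (complex_of_real a) (smult \<i> (vv n))"
      by (intro bexI[of _ "t - smult (complex_of_real a) (smult \<i> (vv n))"] exI[of _ a]) auto
  qed
qed

end

lemma countable_negligible:
  fixes A :: "real set"
  assumes "countable A" shows "negligible A"
proof -
  have "negligible (\<Union>((\<lambda>x. {x}) ` A))"
    by (rule negligible_countable_Union) (use assms in auto)
  then show ?thesis by simp
qed

lemma exp_preimage_countable: "countable {t::real. exp (\<i> * complex_of_real t) = z}"
proof (cases "\<exists>t0. exp (\<i> * complex_of_real t0) = z")
  case False then show ?thesis by simp
next
  case True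
  then obtain t0 where t0: "exp (\<i> * complex_of_real t0) = z" by blast
  have "{t::real. exp (\<i> * complex_of_real t) = z} \<subseteq> range (\<lambda>n::int. t0 + 2 * pi * of_int n)"
  proof
    fix t assume "t \<in> {t::real. exp (\<i> * complex_of_real t) = z}"
    then have "exp (\<i> * complex_of_real t) = exp (\<i> * complex_of_real t0)" using t0 by simp
    then obtain n :: int where n: "\<i> * complex_of_real t = \<i> * complex_of_real t0 + (of_int (2 * n) * pi) * \<i>"
      using exp_eq by blast
    have "t = t0 + 2 * pi * of_int n"
      using arg_cong[OF n, of Im] by simp
    then show "t \<in> range (\<lambda>n::int. t0 + 2 * pi * of_int n)" by blast
  qed
  then show ?thesis by (rule countable_subset) simp
qed

lemma zeros_negligible:
  assumes "w \<noteq> 0" shows "negligible {t. ev w t = 0}"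
proof -
  have "{t. ev w t = 0} = (\<Union>z\<in>{z. poly w z = 0}. {t::real. exp (\<i> * complex_of_real t) = z})"
    by (auto simp: ev_def)
  also have "negligible \<dots>"
    using poly_roots_finite[OF assms] countable_negligible[OF exp_preimage_countable]
    by (intro negligible_Union) auto
  finally show ?thesis .
qed

locale fctx =
  fixes f :: "real \<Rightarrow> real"
  assumes nn: "\<And>t. t \<in> {-pi..pi} \<Longrightarrow> f t \<ge> 0"
    and fint: "f integrable_on {-pi..pi}"
    and fpos: "integral {-pi..pi} f > 0"
begin

lemma intB: "(\<lambda>t. Re (ev p t * cnj (ev q t)) * f t) integrable_on {-pi..pi}"
  by (rule int_mult[OF cont_ev fint nn])

lemma B_add: "Bf f (p + q) r = Bf f p r + Bf f q r"
proof -
  have e: "(\<lambda>t. Re (ev (p + q) t * cnj (ev r t)) * f t) = (\<lambda>t. Re (ev p t * cnj (ev r t)) * f t + Re (ev q t * cnj (ev r t)) * f t)"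
    by (rule ext) (simp add: algebra_simps)
  show ?thesis unfolding Bf_def e by (rule integral_add[OF intB intB])
qed

lemma B_diff: "Bf f (p - q) r = Bf f p r - Bf f q r"
proof -
  have e: "(\<lambda>t. Re (ev (p - q) t * cnj (ev r t)) * f t) = (\<lambda>t. Re (ev p t * cnj (ev r t)) * f t - Re (ev q t * cnj (ev r t)) * f t)"
    by (rule ext) (simp add: algebra_simps)
  show ?thesis unfolding Bf_def e by (rule integral_diff[OF intB intB])
qed

lemma B_scale: "Bf f (smult (complex_of_real a) p) r = a * Bf f p r"
proof -
  have "Re (complex_of_real a * ev p t * cnj (ev r t)) * f t = a * (Re (ev p t * cnj (ev r t)) * f t)" for t
    by (simp add: mult.assoc)
  then show ?thesis unfolding Bf_def by (simp add: mult.assoc)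
qed

lemma B_sym: "Bf f p q = Bf f q p"
proof -
  have e: "(\<lambda>t. Re (ev p t * cnj (ev q t)) * f t) = (\<lambda>t. Re (ev q t * cnj (ev p t)) * f t)"
    by (rule ext) (simp add: algebra_simps)
  show ?thesis unfolding Bf_def e ..
qed

lemma B_nonneg: "Bf f p p \<ge> 0"
  unfolding Bf_def
proof (rule integral_nonneg[OF intB])
  fix t assume "t \<in> {-pi..pi}"
  moreover have "Re (ev p t * cnj (ev p t)) \<ge> 0"
    by (simp flip: complex_norm_square)
  ultimately show "0 \<le> Re (ev p t * cnj (ev p t)) * f t" using nn by simp
qed

sublocale bform "Bf f"
  by unfold_locales (rule B_add, rule B_diff, rule B_scale, rule B_sym, rule B_nonneg)

lemma B_definite:
  assumes "w \<noteq> 0" shows "Bf f w w \<noteq> 0"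
proof
  assume B0: "Bf f w w = 0"
  define S :: "real set" where "S = {-pi..pi}"
  define g where "g = (\<lambda>t. Re (ev w t * cnj (ev w t)) * f t)"
  have gnn: "g t \<ge> 0" if "t \<in> S" for t
    using nn[of t] that by (simp add: g_def S_def flip: complex_norm_square)
  have gint: "g integrable_on S" unfolding g_def S_def by (rule intB)
  have ai: "g absolutely_integrable_on S"
    by (rule nonnegative_absolutely_integrable_1[OF gint gnn])
  have "integral S g = 0" using B0 unfolding Bf_def g_def S_def .
  then have "(LINT x:S|lebesgue. g x) = 0"
    using set_lebesgue_integral_eq_integral(2)[OF ai] by simp
  then have i0: "integral\<^sup>L lebesgue (\<lambda>x. indicator S x *\<^sub>R g x) = 0"
    by (simp add: set_lebesgue_integral_def)
  have ii: "integrable lebesgue (\<lambda>x. indicator S x *\<^sub>R g x)"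
    using ai by (simp add: set_integrable_def)
  have "AE x in lebesgue. 0 \<le> indicator S x *\<^sub>R g x"
    by (rule AE_I2) (auto simp: indicator_def gnn)
  then have "AE x in lebesgue. indicator S x *\<^sub>R g x = 0"
    using integral_nonneg_eq_0_iff_AE[OF ii] i0 by simp
  then have "\<exists>N. negligible N \<and> {x. \<not> indicator S x *\<^sub>R g x = 0} \<subseteq> N"
    by (rule eventually_ae_filter_negligible[THEN iffD1])
  then obtain N where N: "negligible N" "{x. \<not> indicator S x *\<^sub>R g x = 0} \<subseteq> N"
    by blast
  have "integral S f = integral S (\<lambda>_. 0)"
  proof (rule integral_spike[of "N \<union> {t. ev w t = 0}"])
    show "negligible (N \<union> {t. ev w t = 0})" using N(1) zeros_negligible[OF assms] by simp
    fix t assume t: "t \<in> S - (N \<union> {t. ev w t = 0})"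
    then have "g t = 0" using N(2) by (auto simp: indicator_def)
    moreover have "Re (ev w t * cnj (ev w t)) > 0" using t
      by (simp flip: complex_norm_square)
    ultimately show "0 = f t" unfolding g_def by (metis mult_eq_0_iff less_irrefl)
  qed
  then show False using fpos by (simp add: S_def)
qed

lemma expand: "Bf f (r + d) (r + d) = Bf f r r + 2 * Bf f r d + Bf f d d"
  by (simp add: badd badd_r bsym[of d r])

lemma opt_ex1: "\<exists>!p. p \<in> Qn1 n \<and> (\<forall>q\<in>Qn1 n. energy f p \<le> energy f q)"
proof -
  obtain y where y: "y \<in> W n" "\<And>s. s \<in> W n \<Longrightarrow> Bf f (1 - y) s = 0"
    using hasproj_W[of n] unfolding hasproj_def by blast
  define r where "r = 1 - y"
  have rQ: "r \<in> Qn1 n"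
    using y(1) unfolding Qn1_def W_def r_def
    by (auto intro: order.trans[OF degree_diff_le])
  have dW: "q - r \<in> W n" if "q \<in> Qn1 n" for q
    using that rQ unfolding Qn1_def W_def by (auto intro: order.trans[OF degree_diff_le])
  have eq: "energy f q = energy f r + Bf f (q - r) (q - r)" if "q \<in> Qn1 n" for q
  proof -
    have "energy f q = Bf f (r + (q - r)) (r + (q - r))" by (simp add: energy_Bf)
    also have "\<dots> = energy f r + Bf f (q - r) (q - r)"
      unfolding expand using y(2)[OF dW[OF that]] by (simp add: energy_Bf r_def)
    finally show ?thesis .
  qed
  have min: "\<forall>q\<in>Qn1 n. energy f r \<le> energy f q"
    using eq bnonneg by fastforce
  show ?thesis
  proof (rule ex1I[of _ r])
    show "r \<in> Qn1 n \<and> (\<forall>q\<in>Qn1 n. energy f r \<le> energy f q)" using rQ min by blast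
    fix p assume p: "p \<in> Qn1 n \<and> (\<forall>q\<in>Qn1 n. energy f p \<le> energy f q)"
    then have "energy f p \<le> energy f r" using rQ by blast
    then have "Bf f (p - r) (p - r) = 0" using eq[of p] p bnonneg[of "p - r"] by linarith
    then have "p - r = 0" using B_definite by blast
    then show "p = r" by simp
  qed
qed

lemma optpoly_props: "optpoly f n \<in> Qn1 n" "\<And>q. q \<in> Qn1 n \<Longrightarrow> energy f (optpoly f n) \<le> energy f q"
  using theI'[OF opt_ex1[of n]] unfolding optpoly_def[symmetric] by blast+

lemma sigma2_eq: "sigma2 f n = energy f (optpoly f n)"
  unfolding sigma2_def by (rule cInf_eq_minimum) (use optpoly_props in auto)

lemma sigma2_nonneg: "sigma2 f n \<ge> 0"
  using sigma2_eq bnonneg energy_Bf by simp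

lemma sigma2_mono: "sigma2 f (Suc n) \<le> sigma2 f n"
proof -
  have "optpoly f n \<in> Qn1 (Suc n)" using optpoly_props(1)[of n] by (auto simp: Qn1_def)
  then show ?thesis using optpoly_props(2)[of "optpoly f n" "Suc n"] sigma2_eq by simp
qed

end

lemma cmod_half_sq: "(cmod (poly [:1/2, 1/2:] (exp (\<i> * complex_of_real t))))\<^sup>2 = (1 + cos t) / 2"
proof -
  have e: "exp (\<i> * complex_of_real t) = Complex (cos t) (sin t)"
    by (simp flip: cis_conv_exp add: cis.code)
  have "(cmod (poly [:1/2, 1/2:] (exp (\<i> * complex_of_real t))))\<^sup>2
      = ((1 + cos t) / 2)\<^sup>2 + (sin t / 2)\<^sup>2"
    unfolding e cmod_power2 by (simp add: add_divide_distrib)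
  also have "\<dots> = (1 + cos t) / 2"
    unfolding power_divide sin_squared_eq by (simp add: power2_eq_square field_simps)
  finally show ?thesis .
qed

theorem lemma5p2:
  fixes f :: "real \<Rightarrow> real"
  assumes nonneg: "\<And>t. t \<in> {-pi..pi} \<Longrightarrow> f t \<ge> 0"
    and integrable: "f integrable_on {-pi..pi}"
    and pos: "integral {-pi..pi} f > 0"
    and ratio: "(\<lambda>n. sigma2 f (Suc n) / sigma2 f n) \<longlonglongrightarrow> 1"
  shows "(\<forall>n. \<forall>t\<in>{-pi..pi}. kernel f n t \<ge> 0)
    \<and> (\<forall>n. integral {-pi..pi} (kernel f n) = 1)
    \<and> (\<forall>\<delta>. 0 < \<delta> \<and> \<delta> \<le> pi \<longrightarrow>
          (\<lambda>n. integral {t\<in>{-pi..pi}. \<delta> \<le> \<bar>t\<bar>} (kernel f n)) \<longlonglongrightarrow> 0)"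
proof -
  interpret F: fctx f using nonneg integrable pos by unfold_locales auto
  define \<sigma> where "\<sigma> = sigma2 f"
  define P where "P n t = (cmod (poly (optpoly f n) (exp (\<i> * complex_of_real t))))\<^sup>2" for n t
  have kern: "kernel f n t = P n t * f t / \<sigma> n" for n t
    by (simp add: kernel_def P_def \<sigma>_def)
  have Pcont: "continuous_on A (P n)" for n A
    unfolding P_def by (intro continuous_intros)
  have Pnn: "P n t \<ge> 0" for n t by (simp add: P_def)
  have enP: "integral {-pi..pi} (\<lambda>t. P n t * f t) = \<sigma> n" for n
    by (simp add: F.sigma2_eq \<sigma>_def energy_def P_def)
  have spos: "\<sigma> n > 0" for n
  proof (rule ccontr)
    assume "\<not> \<sigma> n > 0"
    then have z: "\<sigma> n = 0" using F.sigma2_nonneg[of n] by (simp add: \<sigma>_def)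
    have "\<sigma> k = 0" if "k \<ge> n" for k
      using that
    proof (induction k rule: dec_induct)
      case base then show ?case by (rule z)
    next
      case (step k) then show ?case
        using F.sigma2_mono[of k] F.sigma2_nonneg[of "Suc k"] by (simp add: \<sigma>_def)
    qed
    then have "eventually (\<lambda>k. sigma2 f (Suc k) / sigma2 f k = 0) sequentially"
      unfolding eventually_sequentially \<sigma>_def by auto
    then have "(\<lambda>k. sigma2 f (Suc k) / sigma2 f k) \<longlonglongrightarrow> 0"
      by (rule tendsto_eventually)
    with ratio show False using LIMSEQ_unique by fastforce
  qed
  have part1: "\<forall>n. \<forall>t\<in>{-pi..pi}. kernel f n t \<ge> 0"
    using nonneg Pnn spos by (auto simp: kern less_imp_le)
  have Kint: "(\<lambda>t. P n t * f t) integrable_on {-pi..pi}" for n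
    by (rule int_mult[OF Pcont integrable nonneg])
  have kern_eq: "kernel f n = (\<lambda>t. (1 / \<sigma> n) * (P n t * f t))" for n
    by (rule ext) (simp add: kern)
  have part2: "\<forall>n. integral {-pi..pi} (kernel f n) = 1"
  proof
    fix n
    have "\<sigma> n \<noteq> 0" using spos[of n] by simp
    then show "integral {-pi..pi} (kernel f n) = 1" by (simp add: kern_eq enP)
  qed
  have part3: "\<forall>\<delta>. 0 < \<delta> \<and> \<delta> \<le> pi \<longrightarrow>
          (\<lambda>n. integral {t\<in>{-pi..pi}. \<delta> \<le> \<bar>t\<bar>} (kernel f n)) \<longlonglongrightarrow> 0"
  proof (intro allI impI)
    fix \<delta> :: real assume d: "0 < \<delta> \<and> \<delta> \<le> pi"
    define c where "c = (1 - cos \<delta>) / 2"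
    have "cos \<delta> < cos 0" using d by (intro cos_monotone_0_pi) auto
    then have cpos: "c > 0" by (simp add: c_def)
    define T where "T = {t\<in>{-pi..pi}. \<delta> \<le> \<bar>t\<bar>}"
    define A where "A = {t::real. \<delta> \<le> \<bar>t\<bar>}"
    have AT: "A \<inter> {-pi..pi} = T" by (auto simp: A_def T_def)
    define r where "r n = \<sigma> (Suc n) / \<sigma> n" for n
    have rle: "r n \<le> 1" for n
      using F.sigma2_mono[of n] spos[of n] by (simp add: r_def \<sigma>_def)
    have bounds: "0 \<le> integral T (kernel f n) \<and> integral T (kernel f n) \<le> (1 - r n) / c" for n
    proof -
      define p where "p = optpoly f n"
      define h :: "complex poly" where "h = [:1/2, 1/2:]"
      have pQ: "p \<in> Qn1 n" using F.optpoly_props(1) by (simp add: p_def)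
      have qQ: "p * h \<in> Qn1 (Suc n)"
      proof -
        have "degree (p * h) \<le> degree p + degree h" by (rule degree_mult_le)
        moreover have "degree h = 1" by (simp add: h_def)
        ultimately have "degree (p * h) \<le> Suc n" using pQ by (simp add: Qn1_def)
        moreover have "poly (p * h) 1 = 1" using pQ by (simp add: Qn1_def h_def)
        ultimately show ?thesis by (simp add: Qn1_def)
      qed
      have sle: "\<sigma> (Suc n) \<le> energy f (p * h)"
        using F.optpoly_props(2)[OF qQ] F.sigma2_eq[of "Suc n"] by (simp add: \<sigma>_def)
      have en: "energy f (p * h) = integral {-pi..pi} (\<lambda>t. (P n t * ((1 + cos t) / 2)) * f t)"
      proof -
        have "(cmod (poly (p * h) (exp (\<i> * complex_of_real t))))\<^sup>2 = P n t * ((1 + cos t) / 2)" for t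
        proof -
          have "(cmod (poly (p * h) (exp (\<i> * complex_of_real t))))\<^sup>2
             = (cmod (poly p (exp (\<i> * complex_of_real t))))\<^sup>2 * (cmod (poly h (exp (\<i> * complex_of_real t))))\<^sup>2"
            by (simp only: poly_mult norm_mult power_mult_distrib)
          then show ?thesis using cmod_half_sq[of t] by (simp only: P_def p_def h_def)
        qed
        note pe = this
        show ?thesis by (simp only: energy_def pe)
      qed
      define Q where "Q t = P n t * ((1 - cos t) / 2)" for t
      have Qnn: "Q t \<ge> 0" for t using Pnn[of n t] cos_le_one[of t] by (simp add: Q_def)
      have int2: "(\<lambda>t. (P n t * ((1 + cos t) / 2)) * f t) integrable_on {-pi..pi}"
        by (rule int_mult[OF _ integrable nonneg]) (auto intro!: continuous_intros Pcont)
      have Qeq: "(\<lambda>t. Q t * f t) = (\<lambda>t. P n t * f t - (P n t * ((1 + cos t) / 2)) * f t)"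
        by (rule ext) (simp add: Q_def algebra_simps diff_divide_distrib add_divide_distrib)
      have Qint: "(\<lambda>t. Q t * f t) integrable_on {-pi..pi}"
        unfolding Qeq by (rule integrable_diff[OF Kint int2])
      have Qval: "integral {-pi..pi} (\<lambda>t. Q t * f t) \<le> \<sigma> n - \<sigma> (Suc n)"
        unfolding Qeq integral_diff[OF Kint int2] enP en[symmetric] using sle by simp
      have sp: "\<sigma> n > 0" by (rule spos)
      show ?thesis
      proof (cases "kernel f n integrable_on T")
        case False
        then show ?thesis using rle[of n] cpos by (simp add: not_integrable_integral)
      next
        case True
        have nn0: "0 \<le> integral T (kernel f n)"
          by (rule integral_nonneg[OF True]) (use part1 in \<open>auto simp: T_def\<close>)
        have iT: "integral T (kernel f n) = integral {-pi..pi} (\<lambda>t. if t \<in> A then kernel f n t else 0)"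
          using integral_restrict_Int[of "{-pi..pi}" A "kernel f n"] AT by simp
        have i1: "(\<lambda>t. if t \<in> A then kernel f n t else 0) integrable_on {-pi..pi}"
          using integrable_restrict_Int[of A "kernel f n" "{-pi..pi}"] AT True by simp
        have i1c: "(\<lambda>t. c * (if t \<in> A then kernel f n t else 0)) integrable_on {-pi..pi}"
          using integrable_on_cmult_left[OF i1, of c] by simp
        have i2c: "(\<lambda>t. (1 / \<sigma> n) * (Q t * f t)) integrable_on {-pi..pi}"
          using integrable_on_cmult_left[OF Qint, of "1 / \<sigma> n"] by simp
        have "integral {-pi..pi} (\<lambda>t. c * (if t \<in> A then kernel f n t else 0))
            \<le> integral {-pi..pi} (\<lambda>t. (1 / \<sigma> n) * (Q t * f t))"
        proof (rule integral_le[OF i1c i2c])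
          fix t :: real assume t: "t \<in> {-pi..pi}"
          have ft: "f t \<ge> 0" using nonneg[OF t] .
          show "c * (if t \<in> A then kernel f n t else 0) \<le> (1 / \<sigma> n) * (Q t * f t)"
          proof (cases "t \<in> A")
            case True
            have "cos \<bar>t\<bar> \<le> cos \<delta>"
              using True t d by (intro cos_monotone_0_pi_le) (auto simp: A_def)
            then have "c \<le> (1 - cos t) / 2" by (simp add: c_def)
            then have "c * (P n t * f t) \<le> ((1 - cos t) / 2) * (P n t * f t)"
              by (rule mult_right_mono) (use Pnn ft in simp)
            then have "c * (P n t * f t) / \<sigma> n \<le> ((1 - cos t) / 2) * (P n t * f t) / \<sigma> n"
              by (rule divide_right_mono) (use sp in simp)
            moreover have "c * kernel f n t = c * (P n t * f t) / \<sigma> n" by (simp add: kern)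
            moreover have "(1 / \<sigma> n) * (Q t * f t) = ((1 - cos t) / 2) * (P n t * f t) / \<sigma> n"
              by (simp add: Q_def mult_ac)
            ultimately show ?thesis using True by simp
          next
            case False
            then show ?thesis using Qnn[of t] ft sp by simp
          qed
        qed
        then have "c * integral T (kernel f n) \<le> (1 / \<sigma> n) * integral {-pi..pi} (\<lambda>t. Q t * f t)"
          unfolding iT by simp
        also have "\<dots> \<le> (1 / \<sigma> n) * (\<sigma> n - \<sigma> (Suc n))"
          using Qval sp by (intro mult_left_mono) auto
        also have "\<dots> = 1 - r n" using sp by (simp add: r_def field_simps)
        finally have "c * integral T (kernel f n) \<le> 1 - r n" .
        then have "integral T (kernel f n) \<le> (1 - r n) / c"
          using cpos by (simp add: field_simps mult.commute)
        with nn0 show ?thesis by simp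
      qed
    qed
    have lim: "(\<lambda>n. (1 - r n) / c) \<longlonglongrightarrow> (1 - 1) / c"
      using ratio cpos unfolding r_def \<sigma>_def by (intro tendsto_intros) auto
    show "(\<lambda>n. integral {t\<in>{-pi..pi}. \<delta> \<le> \<bar>t\<bar>} (kernel f n)) \<longlonglongrightarrow> 0"
      unfolding T_def[symmetric]
    proof (rule tendsto_sandwich[of "\<lambda>_. 0" _ _ "\<lambda>n. (1 - r n) / c"])
      show "\<forall>\<^sub>F n in sequentially. 0 \<le> integral T (kernel f n)" using bounds by simp
      show "\<forall>\<^sub>F n in sequentially. integral T (kernel f n) \<le> (1 - r n) / c" using bounds by simp
      show "(\<lambda>n. (1 - r n) / c) \<longlonglongrightarrow> 0" using lim by simp
    qed simp
  qed
  show ?thesis using part1 part2 part3 by blast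
qed

end
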